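(* Let $\mathcal{D}$ be an $S(2,k,v)$ and $G_1=1$-$\mathrm{BIG}(\mathcal{D})$. If $$\alpha(G_1) > k\left\lfloor \frac{v(v-1)}{k^2v-k^3+k^2-k}\right\rfloor,$$ then $G_1$ is not silver.
   Context: A Steiner $2$-design $S(2,k,v)$ ($2<k<v$) is a pair $(V,\mathcal{B})$ with $|V|=v$ and $\mathcal{B}$ a collection of $k$-subsets of $V$ (blocks) such that every $2$-subset of $V$ lies in exactly one block. The $1$-block intersection graph $1$-$\mathrm{BIG}(\mathcal{D})$ has the blocks as vertices, two blocks adjacent iff they intersect in exactly one element; it is $k(v-k)/(k-1)$-regular with $v(v-1)/(k(k-1))$ vertices. $\alpha(G)$ denotes the independence number; an $\alpha$-set is a maximum independent set. Let $G$ be an $r$-regular graph and $c$ a proper $(r+1)$-coloring of $G$. A vertex $x$ is rainbow with respect to $c$ if every one of the $r+1$ colors appears on $N[x]=N(x)\cup\{x\}$. Given an $\alpha$-set $I$, $c$ is silver with respect to $I$ if every $x\in I$ is rainbow; $G$ is silver if it admits a silver coloring with respect to some $\alpha$-set. *)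

theory Defs
  imports Main
begin

definition steiner_2_design :: "nat \<Rightarrow> nat \<Rightarrow> 'a set \<Rightarrow> 'a set set \<Rightarrow> bool" where
  "steiner_2_design k v V \<B> \<longleftrightarrow>
     finite V \<and> card V = v \<and> 2 < k \<and> k < v \<and>
     (\<forall>b\<in>\<B>. b \<subseteq> V \<and> card b = k) \<and>
     (\<forall>x\<in>V. \<forall>y\<in>V. x \<noteq> y \<longrightarrow> (\<exists>!b. b \<in> \<B> \<and> {x, y} \<subseteq> b))"

text \<open>1-block intersection graph: vertex set = blocks, adjacency = meet in exactly one point.\<close>
definition one_BIG_adj :: "'a set \<Rightarrow> 'a set \<Rightarrow> bool" where
  "one_BIG_adj b b' \<longleftrightarrow> b \<noteq> b' \<and> card (b \<inter> b') = 1"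

definition independent_set :: "'v set \<Rightarrow> ('v \<Rightarrow> 'v \<Rightarrow> bool) \<Rightarrow> 'v set \<Rightarrow> bool" where
  "independent_set Vs E I \<longleftrightarrow> I \<subseteq> Vs \<and> (\<forall>x\<in>I. \<forall>y\<in>I. \<not> E x y)"

definition independence_number :: "'v set \<Rightarrow> ('v \<Rightarrow> 'v \<Rightarrow> bool) \<Rightarrow> nat" where
  "independence_number Vs E = Max {card I | I. independent_set Vs E I}"

definition alpha_set :: "'v set \<Rightarrow> ('v \<Rightarrow> 'v \<Rightarrow> bool) \<Rightarrow> 'v set \<Rightarrow> bool" where
  "alpha_set Vs E I \<longleftrightarrow> independent_set Vs E I \<and> card I = independence_number Vs E"

definition nbhd :: "'v set \<Rightarrow> ('v \<Rightarrow> 'v \<Rightarrow> bool) \<Rightarrow> 'v \<Rightarrow> 'v set" where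
  "nbhd Vs E x = {y \<in> Vs. E x y}"

definition closed_nbhd :: "'v set \<Rightarrow> ('v \<Rightarrow> 'v \<Rightarrow> bool) \<Rightarrow> 'v \<Rightarrow> 'v set" where
  "closed_nbhd Vs E x = insert x (nbhd Vs E x)"

definition regular :: "nat \<Rightarrow> 'v set \<Rightarrow> ('v \<Rightarrow> 'v \<Rightarrow> bool) \<Rightarrow> bool" where
  "regular r Vs E \<longleftrightarrow> (\<forall>x\<in>Vs. card (nbhd Vs E x) = r)"

definition proper_coloring :: "nat \<Rightarrow> 'v set \<Rightarrow> ('v \<Rightarrow> 'v \<Rightarrow> bool) \<Rightarrow> ('v \<Rightarrow> nat) \<Rightarrow> bool" where
  "proper_coloring m Vs E c \<longleftrightarrow>
     (\<forall>x\<in>Vs. c x < m) \<and> (\<forall>x\<in>Vs. \<forall>y\<in>Vs. E x y \<longrightarrow> c x \<noteq> c y)"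

definition rainbow :: "nat \<Rightarrow> 'v set \<Rightarrow> ('v \<Rightarrow> 'v \<Rightarrow> bool) \<Rightarrow> ('v \<Rightarrow> nat) \<Rightarrow> 'v \<Rightarrow> bool" where
  "rainbow m Vs E c x \<longleftrightarrow> {0..<m} \<subseteq> c ` closed_nbhd Vs E x"

definition silver :: "'v set \<Rightarrow> ('v \<Rightarrow> 'v \<Rightarrow> bool) \<Rightarrow> bool" where
  "silver Vs E \<longleftrightarrow> (\<exists>r. regular r Vs E \<and>
     (\<exists>I c. alpha_set Vs E I \<and> proper_coloring (r + 1) Vs E c \<and>
            (\<forall>x\<in>I. rainbow (r + 1) Vs E c x)))"

end

theory Submission
  imports Defs
begin

lemma sd_basic:
  assumes "steiner_2_design k v V B"
  shows "finite V" "card V = v" "2 < k" "k < v" "\<And>b. b \<in> B \<Longrightarrow> b \<subseteq> V"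
    "\<And>b. b \<in> B \<Longrightarrow> card b = k" "finite B"
    "\<And>x y. x \<in> V \<Longrightarrow> y \<in> V \<Longrightarrow> x \<noteq> y \<Longrightarrow> \<exists>!b. b \<in> B \<and> {x, y} \<subseteq> b"
proof -
  show f: "finite V" using assms unfolding steiner_2_design_def by blast
  have "B \<subseteq> Pow V" using assms unfolding steiner_2_design_def by blast
  thus "finite B" using f by (meson finite_Pow_iff finite_subset)
qed (use assms in \<open>auto simp: steiner_2_design_def\<close>)

lemma sd_fin:
  assumes "steiner_2_design k v V B" "b \<in> B"
  shows "finite b"
  using finite_subset[OF sd_basic(5)[OF assms] sd_basic(1)[OF assms(1)]] .

lemma sd_meet:
  assumes "steiner_2_design k v V B" "b \<in> B" "b' \<in> B" "b \<noteq> b'"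
  shows "card (b \<inter> b') \<le> 1"
proof (rule ccontr)
  assume "\<not> card (b \<inter> b') \<le> 1"
  moreover have "finite (b \<inter> b')" using sd_basic(1)[OF assms(1)] sd_basic(5)[OF assms(1) assms(2)]
    by (meson finite_Int finite_subset)
  ultimately obtain x y where xy: "x \<in> b \<inter> b'" "y \<in> b \<inter> b'" "x \<noteq> y"
    using card_le_Suc0_iff_eq by (metis One_nat_def)
  have "x \<in> V" "y \<in> V" using xy sd_basic(5)[OF assms(1) assms(2)] by auto
  from sd_basic(8)[OF assms(1) this xy(3)] have "\<exists>!b. b \<in> B \<and> {x, y} \<subseteq> b" .
  moreover have "{x,y} \<subseteq> b" "{x,y} \<subseteq> b'" using xy by auto
  ultimately show False using assms by blast
qed

lemma sd_rep:
  assumes "steiner_2_design k v V B" "p \<in> V"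
  shows "card {b \<in> B. p \<in> b} * (k - 1) = v - 1"
proof -
  let ?Bp = "{b \<in> B. p \<in> b}"
  have fin: "finite ?Bp" using sd_basic(7)[OF assms(1)] by simp
  have cov: "V - {p} = (\<Union>b\<in>?Bp. b - {p})"
  proof
    show "V - {p} \<subseteq> (\<Union>b\<in>?Bp. b - {p})"
    proof
      fix y assume y: "y \<in> V - {p}"
      then obtain b where "b \<in> B" "{p, y} \<subseteq> b"
        using sd_basic(8)[OF assms(1) assms(2), of y] by auto
      thus "y \<in> (\<Union>b\<in>?Bp. b - {p})" using y by auto
    qed
  next
    show "(\<Union>b\<in>?Bp. b - {p}) \<subseteq> V - {p}" using sd_basic(5)[OF assms(1)] by auto
  qed
  have disj: "\<forall>b\<in>?Bp. \<forall>b'\<in>?Bp. b \<noteq> b' \<longrightarrow> (b - {p}) \<inter> (b' - {p}) = {}"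
  proof (intro ballI impI)
    fix b b' assume b: "b \<in> ?Bp" and b': "b' \<in> ?Bp" and ne: "b \<noteq> b'"
    show "(b - {p}) \<inter> (b' - {p}) = {}"
    proof (rule ccontr)
      assume "(b - {p}) \<inter> (b' - {p}) \<noteq> {}"
      then obtain y where y: "y \<in> b" "y \<in> b'" "y \<noteq> p" by auto
      have "{p, y} \<subseteq> b \<inter> b'" using y b b' by auto
      moreover have "finite (b \<inter> b')" using sd_fin[OF assms(1)] b by simp
      ultimately have "card {p,y} \<le> card (b \<inter> b')" using card_mono by blast
      moreover have "card {p,y} = 2" using y by auto
      moreover have "card (b \<inter> b') \<le> 1" using sd_meet[OF assms(1)] b b' ne by simp
      ultimately show False by linarith
    qed
  qed
  have fins: "\<forall>b\<in>?Bp. finite (b - {p})" using sd_fin[OF assms(1)] by simp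
  have "card (V - {p}) = (\<Sum>b\<in>?Bp. card (b - {p}))"
    unfolding cov by (rule card_UN_disjoint[OF fin fins disj])
  also have "\<dots> = (\<Sum>b\<in>?Bp. k - 1)"
    by (rule sum.cong) (auto simp: sd_basic(6)[OF assms(1)])
  finally have "card (V - {p}) = card ?Bp * (k - 1)" by simp
  moreover have "card (V - {p}) = v - 1" using assms sd_basic(1,2)[OF assms(1)] by simp
  ultimately show ?thesis by simp
qed

lemma sd_count:
  assumes "steiner_2_design k v V B"
  shows "card B * k * (k - 1) = v * (v - 1)"
proof -
  note b = sd_basic[OF assms]
  have "(\<Sum>x\<in>B. card x) = (\<Sum>x\<in>B. \<Sum>p\<in>V. if p \<in> x then 1 else 0)"
  proof (rule sum.cong)
    fix x assume x: "x \<in> B"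
    have "(\<Sum>p\<in>V. if p \<in> x then 1 else (0::nat)) = (\<Sum>p\<in>V \<inter> {p. p \<in> x}. 1)"
      using sum.inter_restrict[OF b(1), of "\<lambda>_. 1::nat" "x"] by simp
    also have "V \<inter> {p. p \<in> x} = x" using b(5)[OF x] by auto
    finally show "card x = (\<Sum>p\<in>V. if p \<in> x then 1 else 0)" by simp
  qed simp
  also have "\<dots> = (\<Sum>p\<in>V. \<Sum>x\<in>B. if p \<in> x then 1 else 0)" by (rule sum.swap)
  also have "\<dots> = (\<Sum>p\<in>V. card {x \<in> B. p \<in> x})"
  proof (rule sum.cong)
    fix p assume "p \<in> V"
    have "(\<Sum>x\<in>B. if p \<in> x then 1 else (0::nat)) = (\<Sum>x\<in>B \<inter> {x. p \<in> x}. 1)"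
      using sum.inter_restrict[OF b(7), of "\<lambda>_. 1::nat" "{x. p \<in> x}"] by simp
    also have "B \<inter> {x. p \<in> x} = {x \<in> B. p \<in> x}" by auto
    finally show "(\<Sum>x\<in>B. if p \<in> x then 1 else 0) = card {x \<in> B. p \<in> x}" by simp
  qed simp
  finally have e: "card B * k = (\<Sum>p\<in>V. card {x \<in> B. p \<in> x})"
    using b(6) by simp
  have "card B * k * (k - 1) = (\<Sum>p\<in>V. card {x \<in> B. p \<in> x} * (k - 1))"
    unfolding e by (simp add: sum_distrib_right)
  also have "\<dots> = (\<Sum>p\<in>V. v - 1)"
    by (rule sum.cong) (use sd_rep[OF assms] in blast)+
  finally show ?thesis using b(2) by simp
qed

lemma sd_degree:
  assumes "steiner_2_design k v V B" "b \<in> B"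
  shows "card (nbhd B one_BIG_adj b) * (k - 1) = k * (v - k)"
proof -
  note bs = sd_basic[OF assms(1)]
  let ?P = "\<lambda>p. {b' \<in> B. p \<in> b'} - {b}"
  have eq: "nbhd B one_BIG_adj b = (\<Union>p\<in>b. ?P p)"
  proof
    show "nbhd B one_BIG_adj b \<subseteq> (\<Union>p\<in>b. ?P p)"
    proof
      fix b' assume "b' \<in> nbhd B one_BIG_adj b"
      hence b': "b' \<in> B" "b \<noteq> b'" "card (b \<inter> b') = 1"
        unfolding nbhd_def one_BIG_adj_def by auto
      then obtain p where "b \<inter> b' = {p}" by (meson card_1_singletonE)
      thus "b' \<in> (\<Union>p\<in>b. ?P p)" using b' by auto
    qed
  next
    show "(\<Union>p\<in>b. ?P p) \<subseteq> nbhd B one_BIG_adj b"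
    proof
      fix b' assume "b' \<in> (\<Union>p\<in>b. ?P p)"
      then obtain p where p: "p \<in> b" "p \<in> b'" "b' \<in> B" "b' \<noteq> b" by auto
      have fi: "finite (b \<inter> b')" using sd_fin[OF assms(1,2)] by simp
      have "card (b \<inter> b') \<noteq> 0" using p fi by auto
      moreover have "card (b \<inter> b') \<le> 1" using sd_meet[OF assms(1,2) p(3)] p by auto
      ultimately have "card (b \<inter> b') = 1" by simp
      thus "b' \<in> nbhd B one_BIG_adj b" using p unfolding nbhd_def one_BIG_adj_def by auto
    qed
  qed
  have finb: "finite b" using sd_fin[OF assms(1,2)] .
  have fins: "\<forall>p\<in>b. finite (?P p)" using bs(7) by simp
  have disj: "\<forall>p\<in>b. \<forall>q\<in>b. p \<noteq> q \<longrightarrow> ?P p \<inter> ?P q = {}"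
  proof (intro ballI impI)
    fix p q assume pq: "p \<in> b" "q \<in> b" "p \<noteq> q"
    show "?P p \<inter> ?P q = {}"
    proof (rule ccontr)
      assume "?P p \<inter> ?P q \<noteq> {}"
      then obtain b' where b': "b' \<in> B" "p \<in> b'" "q \<in> b'" "b' \<noteq> b" by auto
      have "{p, q} \<subseteq> b \<inter> b'" using pq b' by auto
      moreover have "finite (b \<inter> b')" using finb by simp
      ultimately have "card {p,q} \<le> card (b \<inter> b')" using card_mono by blast
      moreover have "card {p,q} = 2" using pq by auto
      moreover have "card (b \<inter> b') \<le> 1" using sd_meet[OF assms(1,2) b'(1)] b' by simp
      ultimately show False by linarith
    qed
  qed
  have "card (nbhd B one_BIG_adj b) = (\<Sum>p\<in>b. card (?P p))"
    unfolding eq by (rule card_UN_disjoint[OF finb fins disj])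
  hence "card (nbhd B one_BIG_adj b) * (k - 1) = (\<Sum>p\<in>b. card (?P p) * (k - 1))"
    by (simp add: sum_distrib_right)
  also have "\<dots> = (\<Sum>p\<in>b. v - k)"
  proof (rule sum.cong)
    fix p assume p: "p \<in> b"
    have "card (?P p) = card {b' \<in> B. p \<in> b'} - 1"
      using p assms(2) bs(7) by (simp add: card_Diff_singleton)
    hence "card (?P p) * (k - 1) = card {b' \<in> B. p \<in> b'} * (k - 1) - (k - 1)"
      by (simp add: diff_mult_distrib)
    also have "\<dots> = v - 1 - (k - 1)" using sd_rep[OF assms(1)] p bs(5)[OF assms(2)] by auto
    also have "\<dots> = v - k" using bs(3) by simp
    finally show "card (?P p) * (k - 1) = v - k" .
  qed simp
  finally show ?thesis using bs(6)[OF assms(2)] by simp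
qed

theorem theorem4:
  fixes k v :: nat and V :: "'a set" and \<B> :: "'a set set"
  assumes "steiner_2_design k v V \<B>"
    and "independence_number \<B> one_BIG_adj >
           k * (v * (v - 1) div (k^2 * v - k^3 + k^2 - k))"
  shows "\<not> silver \<B> one_BIG_adj"
proof
  assume "silver \<B> one_BIG_adj"
  then obtain r I c where reg: "regular r \<B> one_BIG_adj" and al: "alpha_set \<B> one_BIG_adj I"
    and pc: "proper_coloring (r + 1) \<B> one_BIG_adj c"
    and rb: "\<forall>x\<in>I. rainbow (r + 1) \<B> one_BIG_adj c x"
    unfolding silver_def by blast
  note bs = sd_basic[OF assms(1)]
  have "1 < card V" using bs(2,3,4) by simp
  then obtain x y where xy: "x \<in> V" "y \<in> V" "x \<noteq> y"
    using bs(1) card_le_Suc0_iff_eq by (metis One_nat_def not_less)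
  then obtain b0 where b0: "b0 \<in> \<B>" using bs(8)[OF xy] by blast
  have rk: "r * (k - 1) = k * (v - k)"
    using reg b0 sd_degree[OF assms(1) b0] unfolding regular_def by auto
  define D where "D = k^2 * v - k^3 + k^2 - k"
  have Deq: "D = k * (k - 1) * (r + 1)"
  proof -
    have k1: "k \<ge> 1" and kv: "k \<le> v" using bs(3,4) by auto
    have "k^2 * v - k^3 = k^2 * (v - k)"
      by (simp add: diff_mult_distrib2 power2_eq_square power3_eq_cube)
    hence "D = k^2 * (v - k) + k^2 - k" unfolding D_def by simp
    also have "\<dots> = k * (r * (k - 1)) + k * (k - 1)"
      using k1 unfolding rk by (simp add: power2_eq_square diff_mult_distrib2 mult.assoc)
    also have "\<dots> = k * (k - 1) * (r + 1)" by (simp add: algebra_simps)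
    finally show ?thesis .
  qed
  have Dpos: "D > 0" unfolding Deq using bs(3) by simp
  define S where "S j = {b \<in> \<B>. c b = j}" for j
  have indI: "I \<subseteq> \<B>" "\<And>x y. x \<in> I \<Longrightarrow> y \<in> I \<Longrightarrow> \<not> one_BIG_adj x y"
    using al unfolding alpha_set_def independent_set_def by auto
  have cardI: "card I = independence_number \<B> one_BIG_adj"
    using al unfolding alpha_set_def by auto
  have keyS: "card I \<le> k * card (S j)" if j: "j < r + 1" for j
  proof -
    have "\<forall>x\<in>I. \<exists>p. p \<in> x \<and> p \<in> \<Union>(S j)"
    proof
      fix x assume x: "x \<in> I"
      have "{0..<r+1} \<subseteq> c ` closed_nbhd \<B> one_BIG_adj x"
        using rb x unfolding rainbow_def by blast
      hence "j \<in> c ` closed_nbhd \<B> one_BIG_adj x" using j by auto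
      then obtain y where y: "y \<in> closed_nbhd \<B> one_BIG_adj x" "c y = j" by auto
      have xB: "x \<in> \<B>" using x indI by auto
      have yB: "y \<in> \<B>" using y xB unfolding closed_nbhd_def nbhd_def by auto
      have "x \<inter> y \<noteq> {}"
      proof (cases "y = x")
        case True
        have "card x = k" using bs(6) xB by simp
        hence "x \<noteq> {}" using bs(3) by auto
        thus ?thesis using True by simp
      next
        case False
        hence "card (x \<inter> y) = 1" using y unfolding closed_nbhd_def nbhd_def one_BIG_adj_def by auto
        thus ?thesis by auto
      qed
      then obtain p where "p \<in> x" "p \<in> y" by auto
      thus "\<exists>p. p \<in> x \<and> p \<in> \<Union>(S j)" using yB y unfolding S_def by auto
    qed
    then obtain g where g: "\<And>x. x \<in> I \<Longrightarrow> g x \<in> x \<and> g x \<in> \<Union>(S j)" by metis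
    have inj: "inj_on g I"
    proof (rule inj_onI)
      fix x x' assume xx: "x \<in> I" "x' \<in> I" "g x = g x'"
      show "x = x'"
      proof (rule ccontr)
        assume ne: "x \<noteq> x'"
        have "\<not> one_BIG_adj x x'" using indI xx by auto
        hence c1: "card (x \<inter> x') \<noteq> 1" using ne unfolding one_BIG_adj_def by auto
        have "card (x \<inter> x') \<le> 1" using sd_meet[OF assms(1)] xx ne indI by auto
        hence "card (x \<inter> x') = 0" using c1 by simp
        moreover have "finite (x \<inter> x')" using xx indI finite_subset[OF bs(5) bs(1)]
          by blast
        ultimately have "x \<inter> x' = {}" by simp
        thus False using g xx by (metis disjoint_iff)
      qed
    qed
    have "card I = card (g ` I)" using inj by (simp add: card_image)
    also have "\<dots> \<le> card (\<Union>(S j))"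
    proof (rule card_mono)
      have "finite (S j)" using bs(7) unfolding S_def by simp
      moreover have "\<forall>b\<in>S j. finite b" unfolding S_def
        using finite_subset[OF bs(5) bs(1)] by blast
      ultimately show "finite (\<Union>(S j))" by blast
      show "g ` I \<subseteq> \<Union>(S j)" using g by auto
    qed
    also have "\<dots> \<le> sum card (S j)" by (rule card_Union_le_sum_card)
    also have "\<dots> = sum (\<lambda>_. k) (S j)" by (rule sum.cong) (auto simp: S_def bs(6))
    also have "\<dots> = k * card (S j)" by simp
    finally show ?thesis .
  qed
  have sumS: "card \<B> = (\<Sum>j<r+1. card (S j))"
  proof -
    have "\<B> = (\<Union>j<r+1. S j)" using pc unfolding proper_coloring_def S_def by auto
    moreover have "card (\<Union>j<r+1. S j) = (\<Sum>j<r+1. card (S j))"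
      by (rule card_UN_disjoint) (auto simp: S_def bs(7))
    ultimately show ?thesis by simp
  qed
  define M where "M = Min ((\<lambda>j. card (S j)) ` {..<r+1})"
  have "M \<in> (\<lambda>j. card (S j)) ` {..<r+1}" unfolding M_def by (rule Min_in) auto
  then obtain j0 where j0: "j0 < r + 1" "card (S j0) = M" by auto
  have Mle: "M \<le> card (S j)" if "j \<in> {..<r+1}" for j
    unfolding M_def using that by (intro Min_le) auto
  have "card {..<r+1} * M \<le> (\<Sum>j<r+1. card (S j))"
    using sum_bounded_below[of "{..<r+1}" M "\<lambda>j. card (S j)", OF Mle] by simp
  hence A: "(r + 1) * M \<le> card \<B>" using sumS by simp
  have "M * D = ((r + 1) * M) * (k * (k - 1))" unfolding Deq by (simp add: algebra_simps)
  also have "\<dots> \<le> card \<B> * (k * (k - 1))" using A by (rule mult_right_mono) simp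
  also have "\<dots> = v * (v - 1)" using sd_count[OF assms(1)] by (simp add: mult.assoc)
  finally have "M * D \<le> v * (v - 1)" .
  hence "M \<le> v * (v - 1) div D" using Dpos by (simp add: less_eq_div_iff_mult_less_eq)
  hence "k * M \<le> k * (v * (v - 1) div D)" by simp
  moreover have "card I \<le> k * M" using keyS[OF j0(1)] j0(2) by simp
  ultimately have "card I \<le> k * (v * (v - 1) div D)" by linarith
  moreover from assms(2) have "k * (v * (v - 1) div D) < independence_number \<B> one_BIG_adj"
    by (simp only: D_def)
  ultimately show False using cardI by linarith
qed

end
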